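(* If $\lambda\in C_4\cup C_5\cup C_7$, then $t_{\mathrm{cut}}(\lambda)=t^1_{\mathrm{conj}}(\lambda)=t^1_{\mathrm{MAX}}(\lambda)=+\infty$.
   Context: Let $G=\mathbb R^5$ with coordinates $(x,y,z,v,w)$ (the Cartan group, identity $0$), vector fields $X_1=\partial_x-\frac y2\partial_z-\frac{x^2+y^2}{2}\partial_w$, $X_2=\partial_y+\frac x2\partial_z+\frac{x^2+y^2}{2}\partial_v$; sub-Riemannian problem $\dot g=u_1X_1+u_2X_2$, fixed endpoints, minimize $\int\sqrt{u_1^2+u_2^2}\,dt$. For $\lambda=(\theta,c,\alpha,\beta)$, $\theta,\beta\in S^1$, $c\in\mathbb R$, $\alpha\ge0$: $\mathrm{Exp}(\lambda,t)=g(t)$ with $g(0)=0$, $\dot g=\cos\theta(t)X_1+\sin\theta(t)X_2$, $\dot\theta=c$, $\dot c=-\alpha\sin(\theta-\beta)$, $(\theta(0),c(0))=(\theta,c)$. $E=\frac{c^2}2-\alpha\cos(\theta-\beta)$; $C_4=\{\alpha>0,E=-\alpha\}$, $C_5=\{\alpha>0,E=\alpha,\theta-\beta=\pi\}$, $C_7=\{\alpha=c=0\}$. $t_{\mathrm{cut}}(\lambda)=\sup\{t>0:\mathrm{Exp}(\lambda,\cdot)|_{[0,t]}\text{ is length minimizing}\}$; $t^1_{\mathrm{conj}}(\lambda)=\sup\{t>0:\mathrm{Exp}(\lambda,\cdot)|_{[0,t]}\text{ is locally optimal}\}$ (minimizing among admissible curves with same endpoints in a $C([0,t],G)$-neighborhood).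 The first Maxwell time $t^1_{\mathrm{MAX}}$ is defined to be $+\infty$ on $C_3\cup C_4\cup C_5\cup C_7$ (where $C_3=\{\alpha>0,E=\alpha,\theta-\beta\neq\pi\}$). *)

theory Defs
  imports "HOL-Analysis.Analysis"
begin

text \<open>Points of the Cartan group G = R^5 with coordinates (x,y,z,v,w); identity is 0.\<close>
type_synonym cpt = "real \<times> real \<times> real \<times> real \<times> real"

definition X1 :: "cpt \<Rightarrow> cpt" where
  "X1 p = (case p of (x,y,z,v,w) \<Rightarrow> (1, 0, - y / 2, 0, - (x\<^sup>2 + y\<^sup>2) / 2))"

definition X2 :: "cpt \<Rightarrow> cpt" where
  "X2 p = (case p of (x,y,z,v,w) \<Rightarrow> (0, 1, x / 2, (x\<^sup>2 + y\<^sup>2) / 2, 0))"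

text \<open>Admissible curve on [0,T]: h is a Caratheodory (absolutely continuous) solution of
  dh/ds = v1 X1(h) + v2 X2(h) with bounded measurable (L-infinity) controls v1, v2.\<close>
definition sr_admissible :: "real \<Rightarrow> (real \<Rightarrow> cpt) \<Rightarrow> (real \<Rightarrow> real) \<Rightarrow> (real \<Rightarrow> real) \<Rightarrow> bool" where
  "sr_admissible T h v1 v2 \<longleftrightarrow>
     0 \<le> T \<and>
     v1 \<in> borel_measurable (lebesgue_on {0..T}) \<and>
     v2 \<in> borel_measurable (lebesgue_on {0..T}) \<and>
     bounded (v1 ` {0..T}) \<and> bounded (v2 ` {0..T}) \<and>
     (\<lambda>s. v1 s *\<^sub>R X1 (h s) + v2 s *\<^sub>R X2 (h s)) integrable_on {0..T} \<and>
     (\<forall>s\<in>{0..T}. h s = h 0 + integral {0..s} (\<lambda>r. v1 r *\<^sub>R X1 (h r) + v2 r *\<^sub>R X2 (h r)))"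

definition sr_length :: "real \<Rightarrow> (real \<Rightarrow> real) \<Rightarrow> (real \<Rightarrow> real) \<Rightarrow> real" where
  "sr_length T v1 v2 = integral {0..T} (\<lambda>s. sqrt ((v1 s)\<^sup>2 + (v2 s)\<^sup>2))"

definition sr_minimizing :: "real \<Rightarrow> (real \<Rightarrow> cpt) \<Rightarrow> (real \<Rightarrow> real) \<Rightarrow> (real \<Rightarrow> real) \<Rightarrow> bool" where
  "sr_minimizing t g u1 u2 \<longleftrightarrow>
     (\<forall>h v1 v2. sr_admissible t h v1 v2 \<and> h 0 = g 0 \<and> h t = g t \<longrightarrow>
        sr_length t u1 u2 \<le> sr_length t v1 v2)"

text \<open>Local optimality: minimizing among admissible curves with the same endpoints lying
  in a C([0,t],G)-neighbourhood (uniform distance) of g.\<close>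
definition sr_locally_optimal :: "real \<Rightarrow> (real \<Rightarrow> cpt) \<Rightarrow> (real \<Rightarrow> real) \<Rightarrow> (real \<Rightarrow> real) \<Rightarrow> bool" where
  "sr_locally_optimal t g u1 u2 \<longleftrightarrow>
     (\<exists>\<epsilon>>0. \<forall>h v1 v2. sr_admissible t h v1 v2 \<and> h 0 = g 0 \<and> h t = g t \<and>
        (\<forall>s\<in>{0..t}. dist (h s) (g s) < \<epsilon>) \<longrightarrow>
        sr_length t u1 u2 \<le> sr_length t v1 v2)"

definition t_cut :: "(real \<Rightarrow> cpt) \<Rightarrow> (real \<Rightarrow> real) \<Rightarrow> (real \<Rightarrow> real) \<Rightarrow> ereal" where
  "t_cut g u1 u2 = Sup {ereal t | t. t > 0 \<and> sr_minimizing t g u1 u2}"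

definition t_conj1 :: "(real \<Rightarrow> cpt) \<Rightarrow> (real \<Rightarrow> real) \<Rightarrow> (real \<Rightarrow> real) \<Rightarrow> ereal" where
  "t_conj1 g u1 u2 = Sup {ereal t | t. t > 0 \<and> sr_locally_optimal t g u1 u2}"

text \<open>Energy and the strata (theta, beta are real lifts of angles).\<close>
definition energy :: "real \<Rightarrow> real \<Rightarrow> real \<Rightarrow> real \<Rightarrow> real" where
  "energy \<theta> c \<alpha> \<beta> = c\<^sup>2 / 2 - \<alpha> * cos (\<theta> - \<beta>)"

definition in_C3 :: "real \<Rightarrow> real \<Rightarrow> real \<Rightarrow> real \<Rightarrow> bool" where
  "in_C3 \<theta> c \<alpha> \<beta> \<longleftrightarrow> \<alpha> > 0 \<and> energy \<theta> c \<alpha> \<beta> = \<alpha> \<and> \<not> (\<exists>k::int. \<theta> - \<beta> = pi + 2 * pi * k)"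

definition in_C4 :: "real \<Rightarrow> real \<Rightarrow> real \<Rightarrow> real \<Rightarrow> bool" where
  "in_C4 \<theta> c \<alpha> \<beta> \<longleftrightarrow> \<alpha> > 0 \<and> energy \<theta> c \<alpha> \<beta> = - \<alpha>"

definition in_C5 :: "real \<Rightarrow> real \<Rightarrow> real \<Rightarrow> real \<Rightarrow> bool" where
  "in_C5 \<theta> c \<alpha> \<beta> \<longleftrightarrow> \<alpha> > 0 \<and> energy \<theta> c \<alpha> \<beta> = \<alpha> \<and> (\<exists>k::int. \<theta> - \<beta> = pi + 2 * pi * k)"

definition in_C7 :: "real \<Rightarrow> real \<Rightarrow> real \<Rightarrow> real \<Rightarrow> bool" where
  "in_C7 \<theta> c \<alpha> \<beta> \<longleftrightarrow> \<alpha> = 0 \<and> c = 0"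

text \<open>First Maxwell time: the context only specifies it on C3, C4, C5, C7 (where it is +infinity);
  elsewhere it is left unspecified here.\<close>
definition t_MAX1 :: "real \<Rightarrow> real \<Rightarrow> real \<Rightarrow> real \<Rightarrow> ereal" where
  "t_MAX1 \<theta> c \<alpha> \<beta> =
     (if in_C3 \<theta> c \<alpha> \<beta> \<or> in_C4 \<theta> c \<alpha> \<beta> \<or> in_C5 \<theta> c \<alpha> \<beta> \<or> in_C7 \<theta> c \<alpha> \<beta>
      then \<infinity> else undefined)"

text \<open>The extremal trajectory Exp(lambda, .) : (th, c) solve the pendulum equation, and
  g solves dg/dt = cos th X1 + sin th X2 with g(0) = 0 (global solutions exist and are unique).\<close>
definition is_extremal :: "real \<Rightarrow> real \<Rightarrow> real \<Rightarrow> real \<Rightarrow>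
    (real \<Rightarrow> real) \<Rightarrow> (real \<Rightarrow> real) \<Rightarrow> (real \<Rightarrow> cpt) \<Rightarrow> bool" where
  "is_extremal \<theta>0 c0 \<alpha> \<beta> th cc g \<longleftrightarrow>
     th 0 = \<theta>0 \<and> cc 0 = c0 \<and> g 0 = 0 \<and>
     (\<forall>t. (th has_real_derivative cc t) (at t)) \<and>
     (\<forall>t. (cc has_real_derivative (- \<alpha> * sin (th t - \<beta>))) (at t)) \<and>
     (\<forall>t. (g has_vector_derivative (cos (th t) *\<^sub>R X1 (g t) + sin (th t) *\<^sub>R X2 (g t))) (at t))"

end

theory Submission imports Defs begin

lemma gronwall_zero:
  fixes psi c f :: "real \<Rightarrow> real" and a :: real
  assumes a: "a \<ge> 0"
    and d1: "\<And>s. (psi has_real_derivative c s) (at s)"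
    and d2: "\<And>s. (c has_real_derivative f s) (at s)"
    and b: "\<And>s. \<bar>f s\<bar> \<le> a * \<bar>psi s\<bar>"
    and i: "psi 0 = 0" "c 0 = 0"
    and t: "t \<ge> 0"
  shows "psi t = 0"
proof -
  define K where "K = 1 + a"
  define W where "W s = ((psi s)^2 + (c s)^2) * exp (- K * s)" for s
  have D: "(W has_real_derivative ((2 * psi s * c s + 2 * c s * f s) * exp (- K * s)
       - K * ((psi s)^2 + (c s)^2) * exp (- K * s))) (at s)" for s
    unfolding W_def
    by (auto intro!: derivative_eq_intros d1 d2 simp: algebra_simps)
  have le: "(2 * psi s * c s + 2 * c s * f s) \<le> K * ((psi s)^2 + (c s)^2)" for s
  proof -
    have "2 * psi s * c s \<le> (psi s)^2 + (c s)^2"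
      using sum_squares_bound[of "psi s" "c s"] by simp
    moreover have "2 * c s * f s \<le> 2 * \<bar>c s\<bar> * (a * \<bar>psi s\<bar>)"
    proof -
      have "2 * c s * f s \<le> 2 * \<bar>c s\<bar> * \<bar>f s\<bar>"
        by (metis abs_ge_self abs_mult mult.assoc mult_le_cancel_left_pos zero_less_numeral)
      also have "\<dots> \<le> 2 * \<bar>c s\<bar> * (a * \<bar>psi s\<bar>)"
        using b[of s] by (simp add: mult_left_mono)
      finally show ?thesis .
    qed
    moreover have "2 * \<bar>c s\<bar> * (a * \<bar>psi s\<bar>) \<le> a * ((psi s)^2 + (c s)^2)"
    proof -
      have "2 * \<bar>c s\<bar> * \<bar>psi s\<bar> \<le> (psi s)^2 + (c s)^2"
        using sum_squares_bound[of "\<bar>psi s\<bar>" "\<bar>c s\<bar>"] by (simp add: ac_simps)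
      from mult_left_mono[OF this a] show ?thesis by (simp add: algebra_simps)
    qed
    ultimately show ?thesis unfolding K_def by (simp add: algebra_simps)
  qed
  have "W 0 \<ge> W t"
  proof (rule DERIV_nonpos_imp_nonincreasing[OF t])
    fix x
    have "(2 * psi x * c x + 2 * c x * f x) * exp (- K * x) \<le> K * ((psi x)^2 + (c x)^2) * exp (- K * x)"
      using le[of x] by (intro mult_right_mono) auto
    then show "\<exists>y. DERIV W x :> y \<and> y \<le> 0"
      using D[of x]
      by (intro exI[of _ "((2 * psi x * c x + 2 * c x * f x) * exp (- K * x)
       - K * ((psi x)^2 + (c x)^2) * exp (- K * x))"]) auto
  qed
  then have "W t \<le> 0" using i by (simp add: W_def)
  then have "(psi t)^2 + (c t)^2 \<le> 0" unfolding W_def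
    by (simp add: mult_le_0_iff)
  then show ?thesis by (smt (verit) zero_le_power2 power_zero_numeral zero_eq_power2)
qed

lemma th_const:
  assumes "\<alpha> \<ge> 0"
    and "in_C4 \<theta>0 c0 \<alpha> \<beta> \<or> in_C5 \<theta>0 c0 \<alpha> \<beta> \<or> in_C7 \<theta>0 c0 \<alpha> \<beta>"
    and "is_extremal \<theta>0 c0 \<alpha> \<beta> th cc g"
    and "t \<ge> 0"
  shows "th t = \<theta>0"
proof -
  have c0: "c0 = 0" and sn: "\<alpha> * sin (\<theta>0 - \<beta>) = 0"
  proof -
    have "c0 = 0 \<and> \<alpha> * sin (\<theta>0 - \<beta>) = 0"
    proof (cases "in_C7 \<theta>0 c0 \<alpha> \<beta>")
      case True then show ?thesis by (simp add: in_C7_def)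
    next
      case F7: False
      show ?thesis
      proof (cases "in_C4 \<theta>0 c0 \<alpha> \<beta>")
        case True
        then have a: "\<alpha> > 0" and e: "c0^2/2 - \<alpha> * cos (\<theta>0 - \<beta>) = - \<alpha>"
          by (auto simp: in_C4_def energy_def)
        have "cos (\<theta>0 - \<beta>) \<le> 1" by simp
        then have "\<alpha> * cos (\<theta>0 - \<beta>) \<le> \<alpha>" using a by simp
        then have "c0^2 \<le> 0" using e by linarith
        then have "c0 = 0" by simp
        then have "cos (\<theta>0 - \<beta>) = 1" using e a by simp
        then have "sin (\<theta>0 - \<beta>) = 0" using sin_cos_squared_add[of "\<theta>0 - \<beta>"] by simp
        then show ?thesis using \<open>c0 = 0\<close> by simp
      next
        case False
        then have "in_C5 \<theta>0 c0 \<alpha> \<beta>" using assms(2) F7 by blast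
        then obtain k :: int where a: "\<alpha> > 0" and e: "c0^2/2 - \<alpha> * cos (\<theta>0 - \<beta>) = \<alpha>"
          and k: "\<theta>0 - \<beta> = pi + 2 * pi * k"
          by (auto simp: in_C5_def energy_def)
        have "sin (\<theta>0 - \<beta>) = 0" unfolding k
          by (simp add: sin_add)
        moreover have "cos (\<theta>0 - \<beta>) = -1" unfolding k
          by (simp add: cos_add)
        ultimately show ?thesis using e by simp
      qed
    qed
    then show "c0 = 0" "\<alpha> * sin (\<theta>0 - \<beta>) = 0" by auto
  qed
  from assms(3) have E: "th 0 = \<theta>0" "cc 0 = c0"
    "\<And>t. (th has_real_derivative cc t) (at t)"
    "\<And>t. (cc has_real_derivative (- \<alpha> * sin (th t - \<beta>))) (at t)"
    by (auto simp: is_extremal_def)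
  have "(\<lambda>s. th s - \<theta>0) t = 0"
  proof (rule gronwall_zero[OF assms(1), where psi = "\<lambda>s. th s - \<theta>0" and c = cc and f = "\<lambda>s. - \<alpha> * sin (th s - \<beta>)"])
    show "((\<lambda>s. th s - \<theta>0) has_real_derivative cc s) (at s)" for s
      using E(3)[of s] by (auto intro!: derivative_eq_intros)
    show "(cc has_real_derivative - \<alpha> * sin (th s - \<beta>)) (at s)" for s using E(4) .
    show "\<bar>- \<alpha> * sin (th s - \<beta>)\<bar> \<le> \<alpha> * \<bar>th s - \<theta>0\<bar>" for s
    proof -
      have "\<alpha> * sin (th s - \<beta>) = \<alpha> * (sin (th s - \<theta>0) * cos (\<theta>0 - \<beta>) + cos (th s - \<theta>0) * sin (\<theta>0 - \<beta>))"
        using sin_add[of "th s - \<theta>0" "\<theta>0 - \<beta>"] by simp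
      also have "\<dots> = \<alpha> * sin (th s - \<theta>0) * cos (\<theta>0 - \<beta>)" proof -
        have "\<alpha> * (cos (th s - \<theta>0) * sin (\<theta>0 - \<beta>)) = 0" using sn by (metis mult_zero_right mult.left_commute)
        then show ?thesis by (simp add: algebra_simps)
      qed
      finally have X: "\<alpha> * sin (th s - \<beta>) = \<alpha> * sin (th s - \<theta>0) * cos (\<theta>0 - \<beta>)" .
      have "\<bar>- \<alpha> * sin (th s - \<beta>)\<bar> = \<bar>\<alpha> * sin (th s - \<beta>)\<bar>" by simp
      also have "\<dots> = \<bar>\<alpha> * sin (th s - \<theta>0) * cos (\<theta>0 - \<beta>)\<bar>" by (simp only: X)
      also have "\<dots> = \<alpha> * \<bar>sin (th s - \<theta>0)\<bar> * \<bar>cos (\<theta>0 - \<beta>)\<bar>"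
        using assms(1) by (simp add: abs_mult)
      also have "\<dots> \<le> \<alpha> * \<bar>sin (th s - \<theta>0)\<bar> * 1"
        using assms(1) by (intro mult_left_mono) auto
      also have "\<dots> \<le> \<alpha> * \<bar>th s - \<theta>0\<bar>"
        using assms(1) abs_sin_x_le_abs_x by (simp add: mult_left_mono)
      finally show ?thesis .
    qed
    show "th 0 - \<theta>0 = 0" "cc 0 = 0" using E c0 by auto
  qed fact
  then show ?thesis by simp
qed

lemma g_proj:
  assumes ext: "is_extremal \<theta>0 c0 \<alpha> \<beta> th cc g"
    and thc: "\<And>s. s \<ge> 0 \<Longrightarrow> th s = \<theta>0"
    and t: "t \<ge> 0"
  shows "(fst (g t), fst (snd (g t))) = (t * cos \<theta>0, t * sin \<theta>0)"
proof -
  define P where "P s = (fst (g s), fst (snd (g s))) - s *\<^sub>R (cos \<theta>0, sin \<theta>0)" for s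
  have gd: "(g has_derivative (\<lambda>h. h *\<^sub>R (cos (th s) *\<^sub>R X1 (g s) + sin (th s) *\<^sub>R X2 (g s)))) (at s)" for s
    using ext unfolding is_extremal_def has_vector_derivative_def by blast
  have "\<exists>c. \<forall>x\<in>{0..}. P x = c"
  proof (rule has_derivative_zero_constant)
    show "convex {0::real..}" by (rule convex_real_interval)
    fix x :: real assume x: "x \<in> {0..}"
    have "(P has_derivative (\<lambda>h. (fst (h *\<^sub>R (cos (th x) *\<^sub>R X1 (g x) + sin (th x) *\<^sub>R X2 (g x))),
        fst (snd (h *\<^sub>R (cos (th x) *\<^sub>R X1 (g x) + sin (th x) *\<^sub>R X2 (g x))))) - h *\<^sub>R (cos \<theta>0, sin \<theta>0))) (at x)"
      unfolding P_def
      apply (intro derivative_eq_intros)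
      by (rule gd refl)+
    moreover have "(\<lambda>h. (fst (h *\<^sub>R (cos (th x) *\<^sub>R X1 (g x) + sin (th x) *\<^sub>R X2 (g x))),
        fst (snd (h *\<^sub>R (cos (th x) *\<^sub>R X1 (g x) + sin (th x) *\<^sub>R X2 (g x))))) - h *\<^sub>R (cos \<theta>0, sin \<theta>0)) = (\<lambda>h. 0)"
      using thc[of x] x by (auto simp: X1_def X2_def zero_prod_def split: prod.splits)
    ultimately show "(P has_derivative (\<lambda>h. 0)) (at x within {0..})"
      by (metis has_derivative_at_withinI)
  qed
  then obtain c where c: "\<And>x. x \<ge> 0 \<Longrightarrow> P x = c" by auto
  have "P 0 = 0" using ext by (simp add: P_def is_extremal_def zero_prod_def)
  then have "P t = 0" using c[of t] c[of 0] t by simp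
  then show ?thesis by (simp add: P_def zero_prod_def)
qed

lemma len_lower:
  assumes adm: "sr_admissible t h v1 v2"
  shows "norm ((fst (h t), fst (snd (h t))) - (fst (h 0), fst (snd (h 0)))) \<le> sr_length t v1 v2"
proof -
  define F where "F s = v1 s *\<^sub>R X1 (h s) + v2 s *\<^sub>R X2 (h s)" for s
  define L :: "cpt \<Rightarrow> real \<times> real" where "L p = (fst p, fst (snd p))" for p
  define Q where "Q s = (v1 s, v2 s)" for s
  have t: "0 \<le> t" and intF: "F integrable_on {0..t}"
    and hF: "h t = h 0 + integral {0..t} F"
    and b1: "bounded (v1 ` {0..t})" and b2: "bounded (v2 ` {0..t})"
  proof -
    have "0 \<le> t \<and> F integrable_on {0..t} \<and> (\<forall>s\<in>{0..t}. h s = h 0 + integral {0..s} F)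
      \<and> bounded (v1 ` {0..t}) \<and> bounded (v2 ` {0..t})"
      using adm unfolding sr_admissible_def F_def[abs_def] by blast
    then show "0 \<le> t" "F integrable_on {0..t}" "h t = h 0 + integral {0..t} F"
      "bounded (v1 ` {0..t})" "bounded (v2 ` {0..t})"
      by (blast, blast, meson atLeastAtMost_iff order_refl, blast, blast)
  qed
  have bl: "bounded_linear L" unfolding L_def
    by (intro bounded_linear_Pair bounded_linear_fst bounded_linear_compose[OF bounded_linear_fst bounded_linear_snd])
  have LF: "L \<circ> F = Q"
    by (rule ext) (simp add: L_def F_def Q_def X1_def X2_def split: prod.splits)
  have intQ: "Q integrable_on {0..t}" using integrable_linear[OF intF bl] LF by simp
  have iQ: "integral {0..t} Q = L (integral {0..t} F)" using integral_linear[OF intF bl] LF by simp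
  obtain B1 where B1: "\<And>s. s \<in> {0..t} \<Longrightarrow> \<bar>v1 s\<bar> \<le> B1" using b1 unfolding bounded_iff by (auto simp del: atLeastAtMost_iff)
  obtain B2 where B2: "\<And>s. s \<in> {0..t} \<Longrightarrow> \<bar>v2 s\<bar> \<le> B2" using b2 unfolding bounded_iff by (auto simp del: atLeastAtMost_iff)
  have nQ: "norm (Q s) = sqrt ((v1 s)\<^sup>2 + (v2 s)\<^sup>2)" for s by (simp add: Q_def norm_Pair)
  have "Q absolutely_integrable_on {0..t}"
  proof (rule absolutely_integrable_integrable_bound[where g = "\<lambda>s. B1 + B2"])
    show "norm (Q s) \<le> B1 + B2" if "s \<in> {0..t}" for s
      using nQ[of s] sqrt_sum_squares_le_sum_abs[of "v1 s" "v2 s"] B1[OF that] B2[OF that] by simp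
  qed (simp_all add: intQ integrable_const_ivl)
  then have intN: "(\<lambda>s. norm (Q s)) integrable_on {0..t}" by (simp add: absolutely_integrable_on_def)
  have "norm (integral {0..t} Q) \<le> integral {0..t} (\<lambda>s. norm (Q s))"
    by (rule integral_norm_bound_integral[OF intQ intN]) simp
  moreover have "L (h t) - L (h 0) = integral {0..t} Q"
    using hF iQ linear_add[OF bounded_linear.linear[OF bl]] by simp
  ultimately show ?thesis by (simp add: L_def nQ sr_length_def)
qed

lemma Sup_pos_infty:
  assumes "\<And>t. t > 0 \<Longrightarrow> P t"
  shows "Sup {ereal t | t. t > 0 \<and> P t} = \<infinity>"
proof -
  have "\<exists>i\<in>{ereal t | t. t > 0 \<and> P t}. x < i" if "x < \<infinity>" for x
  proof (cases x)
    case (real r)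
    have "P (\<bar>r\<bar> + 1)" using assms by simp
    then show ?thesis using real
      by (intro bexI[of _ "ereal (\<bar>r\<bar> + 1)"]) auto
  next
    case PInf then show ?thesis using that by simp
  next
    case MInf then show ?thesis using assms[of 1] by (intro bexI[of _ "ereal 1"]) auto
  qed
  then show ?thesis by (simp only: top_ereal_def[symmetric] Sup_eq_top_iff) (simp add: top_ereal_def)
qed

theorem theorem6p1:
  fixes \<theta>0 c0 \<alpha> \<beta> :: real
    and th cc :: "real \<Rightarrow> real" and g :: "real \<Rightarrow> cpt"
  assumes "\<alpha> \<ge> 0"
    and "in_C4 \<theta>0 c0 \<alpha> \<beta> \<or> in_C5 \<theta>0 c0 \<alpha> \<beta> \<or> in_C7 \<theta>0 c0 \<alpha> \<beta>"
    and "is_extremal \<theta>0 c0 \<alpha> \<beta> th cc g"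
  shows "t_cut g (\<lambda>s. cos (th s)) (\<lambda>s. sin (th s)) = \<infinity>
    \<and> t_conj1 g (\<lambda>s. cos (th s)) (\<lambda>s. sin (th s)) = \<infinity>
    \<and> t_MAX1 \<theta>0 c0 \<alpha> \<beta> = \<infinity>"
proof -
  have thc: "\<And>s. s \<ge> 0 \<Longrightarrow> th s = \<theta>0" using th_const[OF assms] by blast
  have g0: "g 0 = 0" using assms(3) by (simp add: is_extremal_def)
  have len: "sr_length t (\<lambda>s. cos (th s)) (\<lambda>s. sin (th s)) = t" if "t > 0" for t
    using that by (simp add: sr_length_def)
  have minim: "sr_minimizing t g (\<lambda>s. cos (th s)) (\<lambda>s. sin (th s))" if t: "t > 0" for t
    unfolding sr_minimizing_def
  proof (intro allI impI)
    fix h v1 v2 assume H: "sr_admissible t h v1 v2 \<and> h 0 = g 0 \<and> h t = g t"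
    have "norm ((fst (h t), fst (snd (h t))) - (fst (h 0), fst (snd (h 0)))) \<le> sr_length t v1 v2"
      using len_lower H by blast
    moreover have "(fst (h t), fst (snd (h t))) = (t * cos \<theta>0, t * sin \<theta>0)"
      using H g_proj[OF assms(3) thc, of t] t by simp
    moreover have "(fst (h 0), fst (snd (h 0))) = (0, 0)" using H g0 by (simp add: zero_prod_def)
    moreover have "norm (t * cos \<theta>0, t * sin \<theta>0) = t"
    proof -
      have "(t * cos \<theta>0)^2 + (t * sin \<theta>0)^2 = t^2 * ((cos \<theta>0)^2 + (sin \<theta>0)^2)"
        by (simp only: power_mult_distrib distrib_left)
      also have "\<dots> = t^2" by (simp only: sin_cos_squared_add2 mult_1_right)
      finally have "norm (t * cos \<theta>0, t * sin \<theta>0) = sqrt (t^2)"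
        by (simp add: norm_Pair)
      also have "\<dots> = t" using t by simp
      finally show ?thesis .
    qed
    ultimately show "sr_length t (\<lambda>s. cos (th s)) (\<lambda>s. sin (th s)) \<le> sr_length t v1 v2"
      using len[OF t] by simp
  qed
  have locopt: "sr_locally_optimal t g (\<lambda>s. cos (th s)) (\<lambda>s. sin (th s))" if t: "t > 0" for t
    using minim[OF t] unfolding sr_locally_optimal_def sr_minimizing_def
    by (intro exI[of _ 1]) auto
  show ?thesis
    unfolding t_cut_def t_conj1_def t_MAX1_def
    using Sup_pos_infty[of "\<lambda>t. sr_minimizing t g (\<lambda>s. cos (th s)) (\<lambda>s. sin (th s))", OF minim]
      Sup_pos_infty[of "\<lambda>t. sr_locally_optimal t g (\<lambda>s. cos (th s)) (\<lambda>s. sin (th s))", OF locopt]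
      assms(2) by auto
qed

end
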